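(* Let $(x,b)$ be a \textsc{Set Radius Strip Cover} instance whose optimal lifetime $T$ is positive. Then there is an optimal radial assignment $\rho$ (with lifetime $T$) that is proper, i.e. (1) $\rho_i\in\{0,b_i/T\}$ for every $i$, and (2) for every active sensor $i$ (one with $\rho_i>0$) there is a point $u_i\in[0,1]$ with $u_i\in[x_i-\rho_i,x_i+\rho_i]$ and $u_i\notin[x_k-\rho_k,x_k+\rho_k]$ for every active $k\ne i$.
   Context: \textsc{Set Radius Strip Cover}: An instance is a pair $(x,b)$, where $x=(x_1,\ldots,x_n)\in[0,1]^n$ with $x_1\le\cdots\le x_n$ are sensor locations and $b=(b_1,\ldots,b_n)$, $b_i\ge0$ rational, are battery charges. A solution is a radial assignment $\rho\in[0,\infty)^n$; all sensors are activated at time $0$. Sensor $i$ with $\rho_i>0$ (an active sensor) covers $[x_i-\rho_i,x_i+\rho_i]$ during $[0,b_i/\rho_i]$; a sensor with $\rho_i=0$ is inactive. The lifetime of $\rho$ is the maximum $T$ such that for every $t\in[0,T]$, $[0,1]\subseteq\bigcup_{i:\rho_i>0,\ b_i/\rho_i\ge t}[x_i-\rho_i,x_i+\rho_i]$. An assignment is optimal if it maximizes the lifetime. *)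

theory Defs
  imports Complex_Main
begin

definition srsc_instance :: "nat \<Rightarrow> (nat \<Rightarrow> real) \<Rightarrow> (nat \<Rightarrow> real) \<Rightarrow> bool" where
  "srsc_instance n x b \<longleftrightarrow>
     (\<forall>i<n. 0 \<le> x i \<and> x i \<le> 1) \<and> (\<forall>i j. i \<le> j \<and> j < n \<longrightarrow> x i \<le> x j) \<and>
     (\<forall>i<n. 0 \<le> b i \<and> b i \<in> \<rat>)"

definition radial_assignment :: "nat \<Rightarrow> (nat \<Rightarrow> real) \<Rightarrow> bool" where
  "radial_assignment n \<rho> \<longleftrightarrow> (\<forall>i<n. 0 \<le> \<rho> i)"

definition covered_at :: "nat \<Rightarrow> (nat \<Rightarrow> real) \<Rightarrow> (nat \<Rightarrow> real) \<Rightarrow> (nat \<Rightarrow> real) \<Rightarrow> real \<Rightarrow> bool" where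
  "covered_at n x b \<rho> t \<longleftrightarrow>
     {0..1} \<subseteq> (\<Union>i\<in>{i. i < n \<and> 0 < \<rho> i \<and> t \<le> b i / \<rho> i}. {x i - \<rho> i .. x i + \<rho> i})"

definition is_lifetime :: "nat \<Rightarrow> (nat \<Rightarrow> real) \<Rightarrow> (nat \<Rightarrow> real) \<Rightarrow> (nat \<Rightarrow> real) \<Rightarrow> real \<Rightarrow> bool" where
  "is_lifetime n x b \<rho> T \<longleftrightarrow>
     0 \<le> T \<and> (\<forall>t\<in>{0..T}. covered_at n x b \<rho> t) \<and>
     (\<forall>T'. 0 \<le> T' \<and> (\<forall>t\<in>{0..T'}. covered_at n x b \<rho> t) \<longrightarrow> T' \<le> T)"

definition optimal_lifetime :: "nat \<Rightarrow> (nat \<Rightarrow> real) \<Rightarrow> (nat \<Rightarrow> real) \<Rightarrow> real \<Rightarrow> bool" where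
  "optimal_lifetime n x b T \<longleftrightarrow>
     (\<exists>\<rho>. radial_assignment n \<rho> \<and> is_lifetime n x b \<rho> T) \<and>
     (\<forall>\<rho> T'. radial_assignment n \<rho> \<and> is_lifetime n x b \<rho> T' \<longrightarrow> T' \<le> T)"

definition proper_assignment :: "nat \<Rightarrow> (nat \<Rightarrow> real) \<Rightarrow> (nat \<Rightarrow> real) \<Rightarrow> real \<Rightarrow> (nat \<Rightarrow> real) \<Rightarrow> bool" where
  "proper_assignment n x b T \<rho> \<longleftrightarrow>
     (\<forall>i<n. \<rho> i = 0 \<or> \<rho> i = b i / T) \<and>
     (\<forall>i<n. 0 < \<rho> i \<longrightarrow>
        (\<exists>u\<in>{0..1}. u \<in> {x i - \<rho> i .. x i + \<rho> i} \<and>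
           (\<forall>k<n. k \<noteq> i \<and> 0 < \<rho> k \<longrightarrow> u \<notin> {x k - \<rho> k .. x k + \<rho> k})))"

end

theory Submission
  imports Defs
begin

theorem lemma10:
  fixes n :: nat and x b :: "nat \<Rightarrow> real" and T :: real
  assumes "srsc_instance n x b"
    and "optimal_lifetime n x b T"
    and "0 < T"
  shows "\<exists>\<rho>. radial_assignment n \<rho> \<and> is_lifetime n x b \<rho> T \<and> proper_assignment n x b T \<rho>"
proof -
  have T: "0 < T" by fact
  obtain r0 where r0: "radial_assignment n r0" "is_lifetime n x b r0 T"
    using assms(2) unfolding optimal_lifetime_def by blast
  have covT: "covered_at n x b r0 T" using r0(2) T unfolding is_lifetime_def by auto
  define A where "A = {i. i < n \<and> 0 < r0 i \<and> T \<le> b i / r0 i}"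
  define cov where "cov S \<longleftrightarrow> {0..1::real} \<subseteq> (\<Union>i\<in>S. {x i - b i / T .. x i + b i / T})" for S
  have Apos: "0 < b i" "r0 i \<le> b i / T" if "i \<in> A" for i
  proof -
    have "0 < r0 i" "T \<le> b i / r0 i" using that by (auto simp: A_def)
    then have "T * r0 i \<le> b i" by (simp add: pos_le_divide_eq)
    then show "r0 i \<le> b i / T" using T by (simp add: pos_le_divide_eq mult.commute)
    show "0 < b i" using \<open>T * r0 i \<le> b i\<close> T \<open>0 < r0 i\<close>
      by (smt (verit) mult_pos_pos)
  qed
  have "cov A"
    unfolding cov_def
  proof
    fix u :: real assume "u \<in> {0..1}"
    then obtain i where "i \<in> A" "u \<in> {x i - r0 i .. x i + r0 i}"
      using covT unfolding covered_at_def A_def by blast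
    then show "u \<in> (\<Union>i\<in>A. {x i - b i / T .. x i + b i / T})"
      using Apos(2)[of i] by (intro UN_I[of i]) auto
  qed
  let ?P = "\<lambda>k. \<exists>S. S \<subseteq> A \<and> cov S \<and> card S = k"
  have "?P (card A)" using \<open>cov A\<close> by blast
  then have "?P (LEAST k. ?P k)" by (rule LeastI)
  then obtain S where S: "S \<subseteq> A" "cov S" "card S = (LEAST k. ?P k)" by blast
  have kmin: "card S \<le> card S'" if "S' \<subseteq> A" "cov S'" for S'
    unfolding S(3) using that by (intro Least_le) blast
  have finA: "finite A" unfolding A_def by auto
  have finS: "finite S" using S(1) finA finite_subset by blast
  have Sn: "i < n" if "i \<in> S" for i using S(1) that by (auto simp: A_def)
  have Sb: "0 < b i" if "i \<in> S" for i using S(1) that Apos by auto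
  have minS: "\<not> cov (S - {i})" if "i \<in> S" for i
  proof
    assume "cov (S - {i})"
    moreover have "card (S - {i}) < card S" using finS that
      by (rule card_Diff1_less)
    ultimately show False using kmin[of "S - {i}"] S(1) by auto
  qed
  define \<rho> where "\<rho> i = (if i \<in> S then b i / T else 0)" for i
  have rpos: "0 < \<rho> i \<longleftrightarrow> i \<in> S" for i
    using Sb T by (auto simp: \<rho>_def less_imp_le)
  have rlife: "b i / \<rho> i = T" if "i \<in> S" for i
    using Sb[OF that] T that by (simp add: \<rho>_def)
  have cov_t: "covered_at n x b \<rho> t" if "t \<in> {0..T}" for t
    unfolding covered_at_def
  proof
    fix u :: real assume "u \<in> {0..1}"
    then obtain i where "i \<in> S" and ui: "u \<in> {x i - b i / T .. x i + b i / T}"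
      using S(2) unfolding cov_def by blast
    show "u \<in> (\<Union>i\<in>{i. i < n \<and> 0 < \<rho> i \<and> t \<le> b i / \<rho> i}. {x i - \<rho> i..x i + \<rho> i})"
    proof (rule UN_I[of i])
      show "i \<in> {i. i < n \<and> 0 < \<rho> i \<and> t \<le> b i / \<rho> i}"
        using that Sn[OF \<open>i \<in> S\<close>] rpos[of i] rlife[OF \<open>i \<in> S\<close>] \<open>i \<in> S\<close> by auto
      show "u \<in> {x i - \<rho> i..x i + \<rho> i}" using ui \<open>i \<in> S\<close> by (simp add: \<rho>_def)
    qed
  qed
  have radial: "radial_assignment n \<rho>"
    unfolding radial_assignment_def using Sb T by (auto simp: \<rho>_def less_imp_le)
  have life: "is_lifetime n x b \<rho> T"
    unfolding is_lifetime_def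
  proof (intro conjI allI impI ballI)
    show "0 \<le> T" using T by simp
    show "covered_at n x b \<rho> t" if "t \<in> {0..T}" for t using cov_t that .
    fix T' assume h: "0 \<le> T' \<and> (\<forall>t\<in>{0..T'}. covered_at n x b \<rho> t)"
    show "T' \<le> T"
    proof (rule ccontr)
      assume "\<not> T' \<le> T"
      then have "covered_at n x b \<rho> T'" using h by auto
      then have "(0::real) \<in> (\<Union>i\<in>{i. i < n \<and> 0 < \<rho> i \<and> T' \<le> b i / \<rho> i}. {x i - \<rho> i..x i + \<rho> i})"
        unfolding covered_at_def by (meson atLeastAtMost_iff order_refl subsetD zero_le_one)
      then obtain i where "0 < \<rho> i" "T' \<le> b i / \<rho> i" by blast
      then show False using rpos rlife \<open>\<not> T' \<le> T\<close> by auto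
    qed
  qed
  have proper: "proper_assignment n x b T \<rho>"
    unfolding proper_assignment_def
  proof (intro conjI allI impI)
    fix i assume "i < n"
    show "\<rho> i = 0 \<or> \<rho> i = b i / T" by (simp add: \<rho>_def)
  next
    fix i assume "i < n" "0 < \<rho> i"
    then have iS: "i \<in> S" using rpos by simp
    obtain u where u: "u \<in> {0..1}" "u \<notin> (\<Union>j\<in>S - {i}. {x j - b j / T .. x j + b j / T})"
      using minS[OF iS] unfolding cov_def by blast
    have "u \<in> (\<Union>j\<in>S. {x j - b j / T .. x j + b j / T})"
      using S(2) u(1) unfolding cov_def by blast
    then obtain j where "j \<in> S" "u \<in> {x j - b j / T .. x j + b j / T}" by blast
    then have "j = i" using u(2) by blast
    then have ui: "u \<in> {x i - \<rho> i .. x i + \<rho> i}"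
      using \<open>u \<in> {x j - b j / T .. x j + b j / T}\<close> iS by (simp add: \<rho>_def)
    show "\<exists>u\<in>{0..1}. u \<in> {x i - \<rho> i..x i + \<rho> i} \<and>
           (\<forall>k<n. k \<noteq> i \<and> 0 < \<rho> k \<longrightarrow> u \<notin> {x k - \<rho> k..x k + \<rho> k})"
    proof (intro bexI[of _ u] conjI allI impI)
      fix k assume "k < n" "k \<noteq> i \<and> 0 < \<rho> k"
      then have "k \<in> S - {i}" using rpos by auto
      then show "u \<notin> {x k - \<rho> k..x k + \<rho> k}" using u(2) by (auto simp: \<rho>_def)
    qed (use u ui in auto)
  qed
  show ?thesis using radial life proper by blast
qed

end
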